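(* Let $N$ be a consistent observation machine from $Y$ to $Z$ and let $k=d(N)$. Let $X=Y\times\{0,\dots,k-1\}$, $\hat Y=Y\cup\{\bot\}$, $\hat Z=Z\cup\{\bot\}$, where $\bot$ is a fresh symbol. Then there exist Mealy machines $H$ from $X$ to $\hat Y$ and $M$ from $X$ to $\hat Z$ such that (1) $|S_H|=|S_M|=|S_N|+1$; (2) there exists a Mealy machine $T$ from $\hat Y$ to $\hat Z$ with $T\circ H\equiv M$; and (3) every Mealy machine $T$ from $\hat Y$ to $\hat Z$ with $T\circ H\equiv M$ satisfies $\lambda_T(\overline{y})=\lambda_N(\overline{y})$ for all $\overline{y}\in\Omega_N$.
   Context: An observation machine from $Y$ to $Z$ is a tuple $(Y,Z,S,D,\Delta,\lambda,r)$ with $S$ finite, $D\subseteq S\times Y$, $\Delta:D\to 2^S\setminus\{\emptyset\}$, $\lambda:D\to Z$, $r\in S$. A run on $y_0\dots y_n$ from $s_0$ is $s_0,y_0,z_0,s_1,\dots,s_{n+1}$ with $(s_i,y_i)\in D$, $s_{i+1}\in\Delta(s_i,y_i)$, $z_i=\lambda(s_i,y_i)$; $\Omega_N$ is the set of words having a run from $r$; $N$ is consistent if all runs from $r$ on each $\overline{y}\in\Omega_N$ have the same output word $\lambda_N(\overline{y})$. The degree is $d(N)=\max_{(s,y)\in D}|\Delta(s,y)|$. A Mealy machine from $X$ to $Y$ is $(X,Y,S,\delta,\lambda,r)$ with total $\delta:S\times X\to S$, $\lambda:S\times X\to Y$; $\lambda(\overline{x})$ is the output word from $r$. $T\circ H$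 is the cascade: states $S_H\times S_T$, initial $(r_H,r_T)$, and with $y=\lambda_H(s_H,x)$, $\delta((s_H,s_T),x)=(\delta_H(s_H,x),\delta_T(s_T,y))$, $\lambda((s_H,s_T),x)=\lambda_T(s_T,y)$; $\equiv$ means same output word on every input word. *)

theory Defs
  imports Main
begin

text \<open>Values of Delta and lam outside D are irrelevant.\<close>

definition obs_machine ::
  "'s set \<Rightarrow> ('s \<times> 'y) set \<Rightarrow> ('s \<Rightarrow> 'y \<Rightarrow> 's set) \<Rightarrow> ('s \<Rightarrow> 'y \<Rightarrow> 'z) \<Rightarrow> 's \<Rightarrow> bool" where
  "obs_machine S D Delta lam r \<longleftrightarrow>
     finite S \<and> D \<subseteq> S \<times> UNIV \<and> r \<in> S \<and>
     (\<forall>(s, y) \<in> D. Delta s y \<noteq> {} \<and> Delta s y \<subseteq> S)"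

fun obs_outs ::
  "('s \<times> 'y) set \<Rightarrow> ('s \<Rightarrow> 'y \<Rightarrow> 's set) \<Rightarrow> ('s \<Rightarrow> 'y \<Rightarrow> 'z) \<Rightarrow> 's \<Rightarrow> 'y list \<Rightarrow> 'z list set" where
  "obs_outs D Delta lam s [] = {[]}"
| "obs_outs D Delta lam s (y # ys) =
     (if (s, y) \<in> D
      then (\<lambda>zs. lam s y # zs) ` (\<Union>s' \<in> Delta s y. obs_outs D Delta lam s' ys)
      else {})"

definition obs_lang ::
  "('s \<times> 'y) set \<Rightarrow> ('s \<Rightarrow> 'y \<Rightarrow> 's set) \<Rightarrow> ('s \<Rightarrow> 'y \<Rightarrow> 'z) \<Rightarrow> 's \<Rightarrow> 'y list set" where
  "obs_lang D Delta lam r = {ys. obs_outs D Delta lam r ys \<noteq> {}}"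

definition obs_consistent ::
  "('s \<times> 'y) set \<Rightarrow> ('s \<Rightarrow> 'y \<Rightarrow> 's set) \<Rightarrow> ('s \<Rightarrow> 'y \<Rightarrow> 'z) \<Rightarrow> 's \<Rightarrow> bool" where
  "obs_consistent D Delta lam r \<longleftrightarrow>
     (\<forall>ys \<in> obs_lang D Delta lam r. \<forall>zs1 \<in> obs_outs D Delta lam r ys.
        \<forall>zs2 \<in> obs_outs D Delta lam r ys. zs1 = zs2)"

text \<open>lambda_N(ys): the common output word of all runs from r (for ys in Omega_N).\<close>
definition obs_output ::
  "('s \<times> 'y) set \<Rightarrow> ('s \<Rightarrow> 'y \<Rightarrow> 's set) \<Rightarrow> ('s \<Rightarrow> 'y \<Rightarrow> 'z) \<Rightarrow> 's \<Rightarrow> 'y list \<Rightarrow> 'z list" where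
  "obs_output D Delta lam r ys = (THE zs. zs \<in> obs_outs D Delta lam r ys)"

definition obs_degree :: "('s \<times> 'y) set \<Rightarrow> ('s \<Rightarrow> 'y \<Rightarrow> 's set) \<Rightarrow> nat" where
  "obs_degree D Delta =
     (if D = {} then 0 else Max ((\<lambda>(s, y). card (Delta s y)) ` D))"

definition mealy :: "'s set \<Rightarrow> 'x set \<Rightarrow> ('s \<Rightarrow> 'x \<Rightarrow> 's) \<Rightarrow> 's \<Rightarrow> bool" where
  "mealy S X delta r \<longleftrightarrow> finite S \<and> r \<in> S \<and> (\<forall>s \<in> S. \<forall>x \<in> X. delta s x \<in> S)"

fun mealy_out :: "('s \<Rightarrow> 'x \<Rightarrow> 's) \<Rightarrow> ('s \<Rightarrow> 'x \<Rightarrow> 'y) \<Rightarrow> 's \<Rightarrow> 'x list \<Rightarrow> 'y list" where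
  "mealy_out delta lam s [] = []"
| "mealy_out delta lam s (x # xs) = lam s x # mealy_out delta lam (delta s x) xs"

definition casc_delta ::
  "('h \<Rightarrow> 'x \<Rightarrow> 'h) \<Rightarrow> ('h \<Rightarrow> 'x \<Rightarrow> 'y) \<Rightarrow> ('t \<Rightarrow> 'y \<Rightarrow> 't) \<Rightarrow> ('h \<times> 't) \<Rightarrow> 'x \<Rightarrow> ('h \<times> 't)" where
  "casc_delta dH lH dT = (\<lambda>(sh, st) x. (dH sh x, dT st (lH sh x)))"

definition casc_lam ::
  "('h \<Rightarrow> 'x \<Rightarrow> 'y) \<Rightarrow> ('t \<Rightarrow> 'y \<Rightarrow> 'z) \<Rightarrow> ('h \<times> 't) \<Rightarrow> 'x \<Rightarrow> 'z" where
  "casc_lam lH lT = (\<lambda>(sh, st) x. lT st (lH sh x))"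

definition casc_equiv ::
  "'x set \<Rightarrow> ('h \<Rightarrow> 'x \<Rightarrow> 'h) \<Rightarrow> ('h \<Rightarrow> 'x \<Rightarrow> 'y) \<Rightarrow> 'h
   \<Rightarrow> ('t \<Rightarrow> 'y \<Rightarrow> 't) \<Rightarrow> ('t \<Rightarrow> 'y \<Rightarrow> 'z) \<Rightarrow> 't
   \<Rightarrow> ('m \<Rightarrow> 'x \<Rightarrow> 'm) \<Rightarrow> ('m \<Rightarrow> 'x \<Rightarrow> 'z) \<Rightarrow> 'm \<Rightarrow> bool" where
  "casc_equiv X dH lH rH dT lT rT dM lM rM \<longleftrightarrow>
     (\<forall>xs \<in> lists X.
        mealy_out (casc_delta dH lH dT) (casc_lam lH lT) (rH, rT) xs = mealy_out dM lM rM xs)"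

end

theory Submission
  imports Defs
begin

inductive run for D Delta lam where
  run_nil: "run D Delta lam s [] [] s"
| run_cons: "(s, y) \<in> D \<Longrightarrow> s1 \<in> Delta s y \<Longrightarrow> run D Delta lam s1 w zs s'
    \<Longrightarrow> run D Delta lam s (y # w) (lam s y # zs) s'"

lemma run_append: "run D Delta lam s w zs s1 \<Longrightarrow> zs' \<in> obs_outs D Delta lam s1 v
  \<Longrightarrow> zs @ zs' \<in> obs_outs D Delta lam s (w @ v)"
  by (induction rule: run.induct) auto

lemma run_snoc: "run D Delta lam s w zs s1 \<Longrightarrow> (s1, y) \<in> D \<Longrightarrow> s2 \<in> Delta s1 y
  \<Longrightarrow> run D Delta lam s (w @ [y]) (zs @ [lam s1 y]) s2"
  by (induction rule: run.induct) (auto intro: run.intros)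

lemma run_in: "run D Delta lam s w zs s' \<Longrightarrow> obs_machine S D Delta lam r \<Longrightarrow> s \<in> S \<Longrightarrow> s' \<in> S"
proof (induction rule: run.induct)
  case (run_cons s y s1 w zs s')
  then have "s1 \<in> S" unfolding obs_machine_def by blast
  then show ?case using run_cons by blast
qed auto

lemma outs_run: "zs \<in> obs_outs D Delta lam s w \<Longrightarrow> \<exists>s'. run D Delta lam s w zs s'"
proof (induction w arbitrary: s zs)
  case Nil
  then show ?case by (auto intro: run.intros)
next
  case (Cons y w)
  then obtain s1 zs1 where "(s, y) \<in> D" "s1 \<in> Delta s y" "zs1 \<in> obs_outs D Delta lam s1 w"
    "zs = lam s y # zs1" by (auto split: if_splits)
  moreover obtain s' where "run D Delta lam s1 w zs1 s'" using Cons.IH calculation(3) by blast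
  ultimately show ?case by (metis run.run_cons)
qed

lemma coherent:
  assumes "obs_machine S D Delta lam r" "obs_consistent D Delta lam r"
    "run D Delta lam r w zs1 s1" "run D Delta lam r w zs2 s2" "(s1, y) \<in> D" "(s2, y) \<in> D"
  shows "lam s1 y = lam s2 y"
proof -
  have one: "[lam s y] \<in> obs_outs D Delta lam s [y]" if "(s, y) \<in> D" for s
    using assms(1) that unfolding obs_machine_def by auto
  have a: "zs1 @ [lam s1 y] \<in> obs_outs D Delta lam r (w @ [y])"
    using run_append[OF assms(3) one[OF assms(5)]] .
  have b: "zs2 @ [lam s2 y] \<in> obs_outs D Delta lam r (w @ [y])"
    using run_append[OF assms(4) one[OF assms(6)]] .
  have "w @ [y] \<in> obs_lang D Delta lam r" using a unfolding obs_lang_def by auto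
  with a b assms(2) have "zs1 @ [lam s1 y] = zs2 @ [lam s2 y]"
    unfolding obs_consistent_def by blast
  then show ?thesis by simp
qed

lemma casc_out: "mealy_out (casc_delta dH lH dT) (casc_lam lH lT) (sh, st) xs
   = mealy_out dT lT st (mealy_out dH lH sh xs)"
  by (induction xs arbitrary: sh st) (auto simp: casc_delta_def casc_lam_def)

theorem lemma3:
  fixes S :: "'s set" and D :: "('s \<times> 'y) set" and Delta :: "'s \<Rightarrow> 'y \<Rightarrow> 's set"
    and lam :: "'s \<Rightarrow> 'y \<Rightarrow> 'z" and r :: 's
  assumes "obs_machine S D Delta lam r"
    and "obs_consistent D Delta lam r"
  shows "let k = obs_degree D Delta; X = (UNIV :: 'y set) \<times> {0..<k} in
    \<exists>(SH :: nat set) (dH :: nat \<Rightarrow> 'y \<times> nat \<Rightarrow> nat) (lH :: nat \<Rightarrow> 'y \<times> nat \<Rightarrow> 'y option) rH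
      (SM :: nat set) (dM :: nat \<Rightarrow> 'y \<times> nat \<Rightarrow> nat) (lM :: nat \<Rightarrow> 'y \<times> nat \<Rightarrow> 'z option) rM.
      mealy SH X dH rH \<and> mealy SM X dM rM \<and>
      card SH = card S + 1 \<and> card SM = card S + 1 \<and>
      (\<exists>(ST :: nat set) (dT :: nat \<Rightarrow> 'y option \<Rightarrow> nat) (lT :: nat \<Rightarrow> 'y option \<Rightarrow> 'z option) rT.
         mealy ST UNIV dT rT \<and> casc_equiv X dH lH rH dT lT rT dM lM rM) \<and>
      (\<forall>(ST :: nat set) (dT :: nat \<Rightarrow> 'y option \<Rightarrow> nat) (lT :: nat \<Rightarrow> 'y option \<Rightarrow> 'z option) rT.
         mealy ST UNIV dT rT \<and> casc_equiv X dH lH rH dT lT rT dM lM rM \<longrightarrow>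
         (\<forall>ys \<in> obs_lang D Delta lam r.
            mealy_out dT lT rT (map Some ys) = map Some (obs_output D Delta lam r ys)))"
proof -
  note om = assms(1)
  have finS: "finite S" and rS: "r \<in> S" and DS: "\<And>s y. (s, y) \<in> D \<Longrightarrow> Delta s y \<subseteq> S \<and> Delta s y \<noteq> {}"
    and DS2: "\<And>s y. (s, y) \<in> D \<Longrightarrow> s \<in> S"
    using om unfolding obs_machine_def by auto
  define n where "n = card S"
  obtain b where b: "bij_betw b S {0..<n}" using ex_bij_betw_finite_nat[OF finS] n_def by blast
  obtain g where g: "bij_betw g (Pow S) {0..<card (Pow S)}"
    using ex_bij_betw_finite_nat[of "Pow S"] finS by auto
  define k where "k = obs_degree D Delta"
  define X where "X = (UNIV :: 'y set) \<times> {0..<k}"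
  define dec where "dec = inv_into S b"
  define L where "L = (\<lambda>q y. sorted_list_of_set (b ` Delta (dec q) y))"
  define dH :: "nat \<Rightarrow> 'y \<times> nat \<Rightarrow> nat" where
    "dH = (\<lambda>q (y, i). if q < n \<and> (dec q, y) \<in> D then L q y ! (i mod length (L q y)) else n)"
  define lH :: "nat \<Rightarrow> 'y \<times> nat \<Rightarrow> 'y option" where
    "lH = (\<lambda>q (y, i). if q < n \<and> (dec q, y) \<in> D then Some y else None)"
  define lM :: "nat \<Rightarrow> 'y \<times> nat \<Rightarrow> 'z option" where
    "lM = (\<lambda>q (y, i). if q < n \<and> (dec q, y) \<in> D then Some (lam (dec q) y) else None)"
  define dcT where "dcT = inv_into (Pow S) g"
  define dT :: "nat \<Rightarrow> 'y option \<Rightarrow> nat" where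
    "dT = (\<lambda>m yo. case yo of None \<Rightarrow> m | Some y \<Rightarrow> g (\<Union>s\<in>{s\<in>dcT m. (s, y) \<in> D}. Delta s y))"
  define lT :: "nat \<Rightarrow> 'y option \<Rightarrow> 'z option" where
    "lT = (\<lambda>m yo. case yo of None \<Rightarrow> None | Some y \<Rightarrow> Some (lam (SOME s. s \<in> dcT m \<and> (s, y) \<in> D) y))"
  have decb: "\<And>s. s \<in> S \<Longrightarrow> dec (b s) = s"
    unfolding dec_def using b bij_betw_imp_inj_on inv_into_f_f by metis
  have bS: "\<And>s. s \<in> S \<Longrightarrow> b s < n" using b bij_betwE by fastforce
  have decS: "\<And>q. q < n \<Longrightarrow> dec q \<in> S"
    unfolding dec_def using b by (metis atLeastLessThan_iff bij_betw_def inv_into_into zero_le)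
  have dcTg: "\<And>P. P \<subseteq> S \<Longrightarrow> dcT (g P) = P"
    unfolding dcT_def using g by (meson PowI bij_betw_imp_inj_on inv_into_f_f)
  have Lset: "set (L q y) = b ` Delta (dec q) y" and Lne: "L q y \<noteq> []"
    and Llen: "length (L q y) \<le> k"
    if "(dec q, y) \<in> D" for q y
  proof -
    have fin: "finite (Delta (dec q) y)" using DS[OF that] finS finite_subset by blast
    show "set (L q y) = b ` Delta (dec q) y" unfolding L_def using fin by simp
    show "L q y \<noteq> []" unfolding L_def using fin DS[OF that] by simp
    have "length (L q y) = card (b ` Delta (dec q) y)" unfolding L_def by simp
    also have "\<dots> \<le> card (Delta (dec q) y)" by (rule card_image_le[OF fin])
    also have "\<dots> \<le> k"
    proof -
      have sub: "(\<lambda>(s, y). card (Delta s y)) ` D \<subseteq> {0..card S}"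
        using DS finS by (force intro: card_mono)
      hence "finite ((\<lambda>(s, y). card (Delta s y)) ` D)" using finite_subset by blast
      moreover have "card (Delta (dec q) y) \<in> (\<lambda>(s, y). card (Delta s y)) ` D"
        using that by force
      ultimately show ?thesis unfolding k_def obs_degree_def using that by auto
    qed
    finally show "length (L q y) \<le> k" .
  qed
  have dH_step: "dH q (y, i) < n \<and> dec (dH q (y, i)) \<in> Delta (dec q) y"
    if qn: "q < n" and qD: "(dec q, y) \<in> D" for q y i
  proof -
    have "L q y ! (i mod length (L q y)) \<in> set (L q y)" using Lne[OF qD] by simp
    then obtain s' where "s' \<in> Delta (dec q) y" "L q y ! (i mod length (L q y)) = b s'"
      using Lset[OF qD] by auto
    moreover have "s' \<in> S" using DS[OF qD] calculation by auto
    ultimately show ?thesis unfolding dH_def using qn qD bS decb by auto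
  qed
  have dH_range: "dH q x < Suc n" for q x
  proof -
    obtain y i where x: "x = (y, i)" by (cases x)
    show ?thesis
    proof (cases "q < n \<and> (dec q, y) \<in> D")
      case True
      then show ?thesis using dH_step[of q y i] x by simp
    next
      case False
      then show ?thesis using x unfolding dH_def by auto
    qed
  qed
  have mealyH: "mealy {0..<Suc n} X dH (b r)"
    unfolding mealy_def using dH_range bS[OF rS] by auto
  have inv: "mealy_out (casc_delta dH lH dT) (casc_lam lH lT) (q, g P) xs = mealy_out dH lM q xs"
    if "P \<subseteq> S" "P \<subseteq> {s. \<exists>zs. run D Delta lam r w zs s}" "q < n \<longrightarrow> dec q \<in> P"
    for xs q w P
    using that
  proof (induction xs arbitrary: q w P)
    case Nil
    then show ?case by simp
  next
    case (Cons x xs)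
    obtain y i where x: "x = (y, i)" by (cases x)
    show ?case
    proof (cases "q < n \<and> (dec q, y) \<in> D")
      case True
      define P' where "P' = (\<Union>s\<in>{s\<in>P. (s, y) \<in> D}. Delta s y)"
      have dc: "dcT (g P) = P" using dcTg Cons.prems(1) by blast
      have dT1: "dT (g P) (Some y) = g P'" unfolding dT_def P'_def dc by simp
      have ex: "\<exists>s. s \<in> P \<and> (s, y) \<in> D" using True Cons.prems(3) by blast
      define s0 where "s0 = (SOME s. s \<in> P \<and> (s, y) \<in> D)"
      have s0: "s0 \<in> P \<and> (s0, y) \<in> D" unfolding s0_def using someI_ex[OF ex] .
      have lamq: "lam s0 y = lam (dec q) y"
      proof -
        obtain zs1 where "run D Delta lam r w zs1 s0" using s0 Cons.prems(2) by blast
        moreover obtain zs2 where "run D Delta lam r w zs2 (dec q)" using True Cons.prems(2,3) by blast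
        ultimately show ?thesis using coherent[OF assms] s0 True by blast
      qed
      have lT1: "lT (g P) (Some y) = Some (lam (dec q) y)"
        unfolding lT_def dc using lamq s0_def by simp
      have P'S: "P' \<subseteq> S" unfolding P'_def using DS by blast
      have P'R: "P' \<subseteq> {s. \<exists>zs. run D Delta lam r (w @ [y]) zs s}"
        unfolding P'_def using Cons.prems(2) run_snoc by fastforce
      have P'q: "dH q (y, i) < n \<longrightarrow> dec (dH q (y, i)) \<in> P'"
        unfolding P'_def using dH_step[of q y i] True Cons.prems(3) by blast
      have IH: "mealy_out (casc_delta dH lH dT) (casc_lam lH lT) (dH q (y, i), g P') xs =
          mealy_out dH lM (dH q (y, i)) xs" using Cons.IH[OF P'S P'R P'q] .
      show ?thesis using True IH dT1 lT1
        by (simp add: x casc_delta_def casc_lam_def lH_def lM_def)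
    next
      case False
      have "dH q (y, i) = n" using False unfolding dH_def by auto
      moreover have "mealy_out (casc_delta dH lH dT) (casc_lam lH lT) (n, g P) xs =
          mealy_out dH lM n xs" using Cons.IH[OF Cons.prems(1,2)] by simp
      moreover have "lH q (y, i) = None" "lM q (y, i) = None" using False unfolding lH_def lM_def by auto
      moreover have "dT (g P) None = g P" "lT (g P) None = None" unfolding dT_def lT_def by simp_all
      ultimately show ?thesis
        by (simp add: x casc_delta_def casc_lam_def)
    qed
  qed
  have Tex: "mealy (g ` Pow S) UNIV dT (g {r}) \<and> casc_equiv X dH lH (b r) dT lT (g {r}) dH lM (b r)"
  proof
    show "mealy (g ` Pow S) UNIV dT (g {r})"
      unfolding mealy_def dT_def using finS rS DS
      by (auto split: option.splits intro!: imageI)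
    show "casc_equiv X dH lH (b r) dT lT (g {r}) dH lM (b r)"
      unfolding casc_equiv_def
    proof
      fix xs
      show "mealy_out (casc_delta dH lH dT) (casc_lam lH lT) (b r, g {r}) xs = mealy_out dH lM (b r) xs"
      proof -
        have "{r} \<subseteq> {s. \<exists>zs. run D Delta lam r [] zs s}" using run_nil[of D Delta lam r] by auto
        moreover have "b r < n \<longrightarrow> dec (b r) \<in> {r}" using decb rS by simp
        ultimately show ?thesis using inv[of "{r}"] rS by simp
      qed
    qed
  qed
  have simH: "\<exists>xs\<in>lists X. mealy_out dH lH (b s) xs = map Some w \<and> mealy_out dH lM (b s) xs = map Some zs"
    if "run D Delta lam s w zs s'" "s \<in> S" for s w zs s'
    using that
  proof (induction rule: run.induct)
    case (run_nil s)
    have "[] \<in> lists X" by simp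
    then show ?case by (metis list.simps(8) mealy_out.simps(1))
  next
    case (run_cons s y s1 w zs s')
    have s1S: "s1 \<in> S" using DS run_cons.hyps by blast
    obtain xs where xs: "xs \<in> lists X" "mealy_out dH lH (b s1) xs = map Some w"
      "mealy_out dH lM (b s1) xs = map Some zs" using run_cons.IH s1S by blast
    have D': "(dec (b s), y) \<in> D" using decb run_cons by simp
    have "b s1 \<in> set (L (b s) y)" using Lset[OF D'] decb run_cons by simp
    then obtain j where j: "j < length (L (b s) y)" "L (b s) y ! j = b s1"
      by (metis in_set_conv_nth)
    have jk: "j < k" using j Llen[OF D'] by simp
    have "dH (b s) (y, j) = b s1" using j D' bS[OF run_cons.prems] unfolding dH_def by simp
    moreover have "lH (b s) (y, j) = Some y" "lM (b s) (y, j) = Some (lam s y)"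
      using D' bS[OF run_cons.prems] decb[OF run_cons.prems] unfolding lH_def lM_def by auto
    ultimately show ?case using xs jk unfolding X_def
      by (intro bexI[of _ "(y, j) # xs"]) auto
  qed
  have uniq: "\<forall>(ST :: nat set) (dT :: nat \<Rightarrow> 'y option \<Rightarrow> nat) (lT :: nat \<Rightarrow> 'y option \<Rightarrow> 'z option) rT.
         mealy ST UNIV dT rT \<and> casc_equiv X dH lH (b r) dT lT rT dH lM (b r) \<longrightarrow>
         (\<forall>ys \<in> obs_lang D Delta lam r.
            mealy_out dT lT rT (map Some ys) = map Some (obs_output D Delta lam r ys))"
  proof (intro allI impI ballI)
    fix ST and dT' :: "nat \<Rightarrow> 'y option \<Rightarrow> nat" and lT' :: "nat \<Rightarrow> 'y option \<Rightarrow> 'z option" and rT ys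
    assume A: "mealy ST UNIV dT' rT \<and> casc_equiv X dH lH (b r) dT' lT' rT dH lM (b r)"
      and ys: "ys \<in> obs_lang D Delta lam r"
    obtain zs where zs: "zs \<in> obs_outs D Delta lam r ys" using ys unfolding obs_lang_def by blast
    obtain s' where "run D Delta lam r ys zs s'" using outs_run[OF zs] by blast
    then obtain xs where xs: "xs \<in> lists X" "mealy_out dH lH (b r) xs = map Some ys"
      "mealy_out dH lM (b r) xs = map Some zs" using simH rS by blast
    have "mealy_out dT' lT' rT (map Some ys) = map Some zs"
      using A xs casc_out[of dH lH dT' lT' "b r" rT xs] unfolding casc_equiv_def by metis
    moreover have "obs_output D Delta lam r ys = zs"
      unfolding obs_output_def
    proof (rule the_equality)
      show "zs \<in> obs_outs D Delta lam r ys" by (rule zs)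
      fix zs' assume "zs' \<in> obs_outs D Delta lam r ys"
      then show "zs' = zs" using zs ys assms(2) unfolding obs_consistent_def by blast
    qed
    ultimately show "mealy_out dT' lT' rT (map Some ys) = map Some (obs_output D Delta lam r ys)"
      by simp
  qed
  have card: "card {0..<Suc n} = card S + 1" unfolding n_def by simp
  show ?thesis
    unfolding Let_def k_def[symmetric] X_def[symmetric]
    apply (rule exI[where x="{0..<Suc n}"], rule exI[where x=dH], rule exI[where x=lH], rule exI[where x="b r"])
    apply (rule exI[where x="{0..<Suc n}"], rule exI[where x=dH], rule exI[where x=lM], rule exI[where x="b r"])
    using mealyH card Tex uniq by blast
qed

end
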